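(* Let $k$ be a number field, $\mathcal G$ a finite group, $H$ a finite abelian group, $\mu:\mathcal G\to\mathrm{Aut}(H)$ an action, $k_1/k$ a Galois extension with group identified with $\mathcal G$, and $\tau\in H$. Then $E_{k,\mu,\tau}\subseteq Z_{k_1/k,\mu,\tau}\cap k(\zeta_{o(\tau)})$, with equality if $k_1\cap k(\zeta_{o(\tau)})=k$.
   Context: $o(\tau)$ is the order of $\tau$ and $\zeta_t$ a primitive $t$-th root of unity. Let $\nu_{k,\tau}:\mathrm{Gal}(k(\zeta_{o(\tau)})/k)\to(\mathbb Z/o(\tau))^*$ be given by $g(\zeta_{o(\tau)})=\zeta_{o(\tau)}^{\nu_{k,\tau}(g)}$; $\tilde G_{k,\mu,\tau}=\{(g_1,g_2)\in\mathcal G\times\mathrm{Gal}(k(\zeta_{o(\tau)})/k):\mu(g_1)(\tau)=\tau^{\nu_{k,\tau}(g_2)}\}$; $G_{k,\mu,\tau}$ is the set of $g_2$ with $(g_1,g_2)\in\tilde G_{k,\mu,\tau}$ for some $g_1$, and $E_{k,\mu,\tau}$ is its fixed field in $k(\zeta_{o(\tau)})$. Identify $\mathrm{Gal}(k_1(\zeta_{o(\tau)})/k)$ with its image in $\mathcal G\times\mathrm{Gal}(k(\zeta_{o(\tau)})/k)$ via $g\mapsto(g|_{k_1},g|_{k(\zeta_{o(\tau)})})$, put $\tilde G_{k_1/k,\mu,\tau}=\tilde G_{k,\mu,\tau}\cap\mathrm{Gal}(k_1(\zeta_{o(\tau)})/k)$, and let $Z_{k_1/k,\mu,\tau}$ be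 its fixed field in $k_1(\zeta_{o(\tau)})$. *)

theory Defs
  imports "HOL-Algebra.Algebra" "HOL-Analysis.Analysis"
begin

text \<open>All fields are modelled as subfields of the complex numbers.\<close>

definition is_subfield_C :: "complex set \<Rightarrow> bool" where
  "is_subfield_C S \<longleftrightarrow> 0 \<in> S \<and> 1 \<in> S \<and>
     (\<forall>x\<in>S. \<forall>y\<in>S. x + y \<in> S \<and> x - y \<in> S \<and> x * y \<in> S) \<and>
     (\<forall>x\<in>S. x \<noteq> 0 \<longrightarrow> inverse x \<in> S)"

definition fin_dim_over :: "complex set \<Rightarrow> complex set \<Rightarrow> bool" where
  "fin_dim_over L K \<longleftrightarrow> (\<exists>B. finite B \<and> B \<subseteq> L \<and>
     (\<forall>x\<in>L. \<exists>c. (\<forall>b. c b \<in> K) \<and> x = (\<Sum>b\<in>B. c b * b)))"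

definition number_field :: "complex set \<Rightarrow> bool" where
  "number_field k \<longleftrightarrow> is_subfield_C k \<and> fin_dim_over k (of_rat ` UNIV)"

definition adjoin :: "complex set \<Rightarrow> complex \<Rightarrow> complex set" where
  "adjoin K z = \<Inter>{F. is_subfield_C F \<and> K \<subseteq> F \<and> z \<in> F}"

definition Gal :: "complex set \<Rightarrow> complex set \<Rightarrow> (complex \<Rightarrow> complex) set" where
  "Gal L K = {\<sigma> \<in> Bij L. (\<forall>x\<in>L. \<forall>y\<in>L. \<sigma> (x + y) = \<sigma> x + \<sigma> y \<and> \<sigma> (x * y) = \<sigma> x * \<sigma> y)
                          \<and> (\<forall>x\<in>K. \<sigma> x = x)}"

definition galois_group :: "complex set \<Rightarrow> complex set \<Rightarrow> (complex \<Rightarrow> complex) monoid" where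
  "galois_group L K = BijGroup L \<lparr>carrier := Gal L K\<rparr>"

definition fixed_field :: "complex set \<Rightarrow> (complex \<Rightarrow> complex) set \<Rightarrow> complex set" where
  "fixed_field L S = {x \<in> L. \<forall>\<sigma>\<in>S. \<sigma> x = x}"

definition galois_ext :: "complex set \<Rightarrow> complex set \<Rightarrow> bool" where
  "galois_ext L K \<longleftrightarrow> is_subfield_C K \<and> is_subfield_C L \<and> K \<subseteq> L \<and> fin_dim_over L K
     \<and> fixed_field L (Gal L K) = K"

definition zeta :: "nat \<Rightarrow> complex" where
  "zeta n = exp (2 * pi * \<i> / of_nat n)"

text \<open>nu(g): the class a in (Z/n)^* (represented by 0 <= a < n coprime to n) with g(zeta) = zeta^a.\<close>
definition nu :: "nat \<Rightarrow> (complex \<Rightarrow> complex) \<Rightarrow> nat" where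
  "nu n g = (THE a. a < n \<and> coprime a n \<and> g (zeta n) = zeta n ^ a)"

definition G_set :: "complex set \<Rightarrow> ('g, 'c) monoid_scheme \<Rightarrow> ('h, 'd) monoid_scheme
    \<Rightarrow> ('g \<Rightarrow> 'h \<Rightarrow> 'h) \<Rightarrow> 'h \<Rightarrow> (complex \<Rightarrow> complex) set" where
  "G_set k G H \<mu> \<tau> = (let n = group.ord H \<tau> in
     {g2 \<in> Gal (adjoin k (zeta n)) k. \<exists>g1\<in>carrier G. \<mu> g1 \<tau> = \<tau> [^]\<^bsub>H\<^esub> nu n g2})"

definition E_field :: "complex set \<Rightarrow> ('g, 'c) monoid_scheme \<Rightarrow> ('h, 'd) monoid_scheme
    \<Rightarrow> ('g \<Rightarrow> 'h \<Rightarrow> 'h) \<Rightarrow> 'h \<Rightarrow> complex set" where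
  "E_field k G H \<mu> \<tau> = fixed_field (adjoin k (zeta (group.ord H \<tau>))) (G_set k G H \<mu> \<tau>)"

text \<open>tilde G_{k1/k,mu,tau}: elements g of Gal(k1(zeta)/k) whose image
  (theta(g|k1), g|k(zeta)) lies in tilde G_{k,mu,tau}; theta identifies Gal(k1/k) with G.\<close>
definition Gt_rel :: "complex set \<Rightarrow> complex set \<Rightarrow> ((complex \<Rightarrow> complex) \<Rightarrow> 'g)
    \<Rightarrow> ('h, 'd) monoid_scheme \<Rightarrow> ('g \<Rightarrow> 'h \<Rightarrow> 'h) \<Rightarrow> 'h \<Rightarrow> (complex \<Rightarrow> complex) set" where
  "Gt_rel k1 k \<theta> H \<mu> \<tau> = (let n = group.ord H \<tau> in
     {g \<in> Gal (adjoin k1 (zeta n)) k.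
        \<mu> (\<theta> (restrict g k1)) \<tau> = \<tau> [^]\<^bsub>H\<^esub> nu n (restrict g (adjoin k (zeta n)))})"

definition Z_field :: "complex set \<Rightarrow> complex set \<Rightarrow> ((complex \<Rightarrow> complex) \<Rightarrow> 'g)
    \<Rightarrow> ('h, 'd) monoid_scheme \<Rightarrow> ('g \<Rightarrow> 'h \<Rightarrow> 'h) \<Rightarrow> 'h \<Rightarrow> complex set" where
  "Z_field k1 k \<theta> H \<mu> \<tau> =
     fixed_field (adjoin k1 (zeta (group.ord H \<tau>))) (Gt_rel k1 k \<theta> H \<mu> \<tau>)"

end

theory Submission
  imports Defs "HOL-Computational_Algebra.Fundamental_Theorem_Algebra"
begin


definition polys :: "complex set \<Rightarrow> complex poly set" where
  "polys F = {p. \<forall>i. coeff p i \<in> F}"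

definition fhom :: "complex set \<Rightarrow> (complex \<Rightarrow> complex) \<Rightarrow> bool" where
  "fhom M h \<longleftrightarrow> (\<forall>x\<in>M. \<forall>y\<in>M. h (x + y) = h x + h y \<and> h (x * y) = h x * h y) \<and> h 1 = 1"

lemma sf_0: "is_subfield_C F \<Longrightarrow> 0 \<in> F" by (simp add: is_subfield_C_def)
lemma sf_1: "is_subfield_C F \<Longrightarrow> 1 \<in> F" by (simp add: is_subfield_C_def)
lemma sf_add: "is_subfield_C F \<Longrightarrow> x \<in> F \<Longrightarrow> y \<in> F \<Longrightarrow> x + y \<in> F" by (simp add: is_subfield_C_def)
lemma sf_diff: "is_subfield_C F \<Longrightarrow> x \<in> F \<Longrightarrow> y \<in> F \<Longrightarrow> x - y \<in> F" by (simp add: is_subfield_C_def)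
lemma sf_mult: "is_subfield_C F \<Longrightarrow> x \<in> F \<Longrightarrow> y \<in> F \<Longrightarrow> x * y \<in> F" by (simp add: is_subfield_C_def)
lemma sf_inv: "is_subfield_C F \<Longrightarrow> x \<in> F \<Longrightarrow> inverse x \<in> F"
  by (cases "x = 0") (auto simp: is_subfield_C_def)
lemma sf_uminus: "is_subfield_C F \<Longrightarrow> x \<in> F \<Longrightarrow> - x \<in> F"
  using sf_diff[of F 0 x] sf_0 by auto
lemma sf_divide: "is_subfield_C F \<Longrightarrow> x \<in> F \<Longrightarrow> y \<in> F \<Longrightarrow> x / y \<in> F"
  by (simp add: divide_inverse sf_mult sf_inv)
lemma sf_sum: "is_subfield_C F \<Longrightarrow> (\<And>i. i \<in> A \<Longrightarrow> f i \<in> F) \<Longrightarrow> sum f A \<in> F"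
  by (induction A rule: infinite_finite_induct) (auto simp: sf_0 sf_add)
lemma sf_prod: "is_subfield_C F \<Longrightarrow> (\<And>i. i \<in> A \<Longrightarrow> f i \<in> F) \<Longrightarrow> prod f A \<in> F"
  by (induction A rule: infinite_finite_induct) (auto simp: sf_1 sf_mult)
lemma sf_power: "is_subfield_C F \<Longrightarrow> x \<in> F \<Longrightarrow> x ^ n \<in> F"
  by (induction n) (auto simp: sf_1 sf_mult)

lemma polys_coeff: "p \<in> polys F \<Longrightarrow> coeff p i \<in> F" by (simp add: polys_def)

lemma poly_in_sf: "is_subfield_C M \<Longrightarrow> p \<in> polys M \<Longrightarrow> z \<in> M \<Longrightarrow> poly p z \<in> M"
  unfolding poly_altdef by (intro sf_sum sf_mult sf_power polys_coeff) auto

lemma polys_mono: "F \<subseteq> M \<Longrightarrow> p \<in> polys F \<Longrightarrow> p \<in> polys M"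
  by (auto simp: polys_def)

lemma polys_add: "is_subfield_C F \<Longrightarrow> p \<in> polys F \<Longrightarrow> q \<in> polys F \<Longrightarrow> p + q \<in> polys F"
  by (simp add: polys_def sf_add)
lemma polys_diff: "is_subfield_C F \<Longrightarrow> p \<in> polys F \<Longrightarrow> q \<in> polys F \<Longrightarrow> p - q \<in> polys F"
  by (simp add: polys_def sf_diff)
lemma polys_uminus: "is_subfield_C F \<Longrightarrow> p \<in> polys F \<Longrightarrow> - p \<in> polys F"
  by (simp add: polys_def sf_uminus)
lemma polys_mult: "is_subfield_C F \<Longrightarrow> p \<in> polys F \<Longrightarrow> q \<in> polys F \<Longrightarrow> p * q \<in> polys F"
  by (auto simp: polys_def coeff_mult intro!: sf_sum sf_mult)
lemma polys_const: "is_subfield_C F \<Longrightarrow> c \<in> F \<Longrightarrow> [:c:] \<in> polys F"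
  by (auto simp: polys_def coeff_pCons sf_0 split: nat.splits)
lemma polys_lin: "is_subfield_C F \<Longrightarrow> c \<in> F \<Longrightarrow> d \<in> F \<Longrightarrow> [:c, d:] \<in> polys F"
  by (auto simp: polys_def coeff_pCons sf_0 split: nat.splits)
lemma polys_smult: "is_subfield_C F \<Longrightarrow> c \<in> F \<Longrightarrow> p \<in> polys F \<Longrightarrow> smult c p \<in> polys F"
  by (simp add: polys_def sf_mult)
lemma polys_monom: "is_subfield_C F \<Longrightarrow> c \<in> F \<Longrightarrow> monom c n \<in> polys F"
  by (simp add: polys_def coeff_monom sf_0)
lemma polys_zero: "is_subfield_C F \<Longrightarrow> 0 \<in> polys F"
  by (simp add: polys_def sf_0)
lemma polys_one: "is_subfield_C F \<Longrightarrow> 1 \<in> polys F"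
  using polys_const[of F 1] by (simp add: sf_1 one_pCons)
lemma polys_prod: "is_subfield_C F \<Longrightarrow> (\<And>i. i \<in> A \<Longrightarrow> f i \<in> polys F) \<Longrightarrow> prod f A \<in> polys F"
  by (induction A rule: infinite_finite_induct) (auto simp: polys_one polys_mult)

lemma fhom_0: "fhom M h \<Longrightarrow> is_subfield_C M \<Longrightarrow> h 0 = 0"
proof -
  assume a: "fhom M h" "is_subfield_C M"
  have "h (0 + 0) = h 0 + h 0" using a sf_0[OF a(2)] unfolding fhom_def by blast
  thus ?thesis by simp
qed

lemma fhom_add: "fhom M h \<Longrightarrow> x \<in> M \<Longrightarrow> y \<in> M \<Longrightarrow> h (x + y) = h x + h y"
  by (simp add: fhom_def)
lemma fhom_mult: "fhom M h \<Longrightarrow> x \<in> M \<Longrightarrow> y \<in> M \<Longrightarrow> h (x * y) = h x * h y"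
  by (simp add: fhom_def)
lemma fhom_1: "fhom M h \<Longrightarrow> h 1 = 1"
  by (simp add: fhom_def)
lemma fhom_diff: "fhom M h \<Longrightarrow> is_subfield_C M \<Longrightarrow> x \<in> M \<Longrightarrow> y \<in> M \<Longrightarrow> h (x - y) = h x - h y"
proof -
  assume a: "fhom M h" "is_subfield_C M" "x \<in> M" "y \<in> M"
  have "h (x - y + y) = h (x - y) + h y" using a by (intro fhom_add) (auto simp: sf_diff)
  thus ?thesis by simp
qed
lemma fhom_sum: "fhom M h \<Longrightarrow> is_subfield_C M \<Longrightarrow> (\<And>i. i \<in> A \<Longrightarrow> f i \<in> M) \<Longrightarrow> h (sum f A) = (\<Sum>i\<in>A. h (f i))"
proof (induction A rule: infinite_finite_induct)
  case (infinite A) then show ?case by (simp add: fhom_0)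
next
  case empty then show ?case by (simp add: fhom_0)
next
  case (insert x F) then show ?case by (simp add: fhom_add sf_sum)
qed
lemma fhom_power: "fhom M h \<Longrightarrow> is_subfield_C M \<Longrightarrow> x \<in> M \<Longrightarrow> h (x ^ n) = h x ^ n"
  by (induction n) (auto simp: fhom_1 fhom_mult sf_power)

lemma poly_sum_bound: "degree (p::complex poly) \<le> N \<Longrightarrow> poly p x = (\<Sum>i\<le>N. coeff p i * x ^ i)"
proof -
  assume "degree p \<le> N"
  have "(\<Sum>i\<le>N. coeff p i * x ^ i) = (\<Sum>i\<le>degree p. coeff p i * x ^ i)"
    by (rule sum.mono_neutral_right) (use \<open>degree p \<le> N\<close> in \<open>auto simp: coeff_eq_0\<close>)
  thus ?thesis using poly_altdef[of p x] by simp
qed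

lemma fhom_poly:
  assumes "fhom M h" "is_subfield_C M" "p \<in> polys M" "z \<in> M"
  shows "h (poly p z) = poly (map_poly h p) (h z)"
proof -
  have h0: "h 0 = 0" using assms fhom_0 by blast
  have "h (poly p z) = (\<Sum>i\<le>degree p. h (coeff p i * z ^ i))"
    unfolding poly_altdef using assms
    by (intro fhom_sum) (auto intro!: sf_mult sf_power polys_coeff)
  also have "\<dots> = (\<Sum>i\<le>degree p. coeff (map_poly h p) i * h z ^ i)"
    using assms h0 by (intro sum.cong) (auto simp: coeff_map_poly fhom_mult fhom_power sf_power polys_coeff)
  also have "\<dots> = poly (map_poly h p) (h z)"
    by (rule poly_sum_bound[symmetric]) (simp add: map_poly_degree_leq)
  finally show ?thesis .
qed

lemma fhom_poly_fix:
  assumes "fhom M h" "is_subfield_C M" "p \<in> polys F" "F \<subseteq> M" "z \<in> M" "\<forall>c\<in>F. h c = c"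
  shows "h (poly p z) = poly p (h z)"
proof -
  have "map_poly h p = p"
    using assms by (intro poly_eqI) (auto simp: coeff_map_poly fhom_0 polys_coeff)
  with fhom_poly[OF assms(1,2) polys_mono[OF assms(4,3)] assms(5)] show ?thesis by simp
qed

lemma map_poly_polys: "fhom M h \<Longrightarrow> is_subfield_C M \<Longrightarrow> h ` M \<subseteq> N \<Longrightarrow> p \<in> polys M \<Longrightarrow> map_poly h p \<in> polys N"
  by (auto simp: polys_def coeff_map_poly fhom_0)

lemma map_poly_add_h: "fhom M h \<Longrightarrow> is_subfield_C M \<Longrightarrow> p \<in> polys M \<Longrightarrow> q \<in> polys M \<Longrightarrow>
   map_poly h (p + q) = map_poly h p + map_poly h q"
  by (intro poly_eqI) (auto simp: coeff_map_poly fhom_0 fhom_add polys_coeff)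

lemma map_poly_diff_h: "fhom M h \<Longrightarrow> is_subfield_C M \<Longrightarrow> p \<in> polys M \<Longrightarrow> q \<in> polys M \<Longrightarrow>
   map_poly h (p - q) = map_poly h p - map_poly h q"
  by (intro poly_eqI) (auto simp: coeff_map_poly fhom_0 fhom_diff polys_coeff)

lemma map_poly_mult_h: "fhom M h \<Longrightarrow> is_subfield_C M \<Longrightarrow> p \<in> polys M \<Longrightarrow> q \<in> polys M \<Longrightarrow>
   map_poly h (p * q) = map_poly h p * map_poly h q"
  by (intro poly_eqI) (auto simp: coeff_map_poly fhom_0 coeff_mult fhom_sum fhom_mult polys_coeff sf_mult)

lemma map_poly_const_h: "fhom M h \<Longrightarrow> is_subfield_C M \<Longrightarrow> map_poly h [:c:] = [:h c:]"
  by (intro poly_eqI) (auto simp: coeff_map_poly fhom_0 coeff_pCons split: nat.splits)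

lemma prod_lin_polys:
  assumes "is_subfield_C F" "finite Os" "Os \<subseteq> F"
  shows "(\<Prod>b\<in>Os. [:-b, 1:]) \<in> polys F"
  using assms by (intro polys_prod polys_lin) (auto simp: sf_uminus sf_1)

lemma map_prod_lin:
  assumes "fhom F h" "is_subfield_C F" "finite Os" "Os \<subseteq> F"
  shows "map_poly h (\<Prod>b\<in>Os. [:-b, 1:]) = (\<Prod>b\<in>Os. [:-h b, 1:])"
  using assms(3,4)
proof (induction Os rule: finite_induct)
  case empty
  then show ?case using assms by (simp add: fhom_0 fhom_1 map_poly_pCons one_pCons)
next
  case (insert x Os)
  have l: "[:-x, 1:] \<in> polys F" using insert assms by (intro polys_lin) (auto simp: sf_uminus sf_1)
  have "map_poly h (\<Prod>b\<in>insert x Os. [:-b, 1:]) = map_poly h ([:-x,1:] * (\<Prod>b\<in>Os. [:-b, 1:]))"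
    using insert by simp
  also have "\<dots> = map_poly h [:-x,1:] * map_poly h (\<Prod>b\<in>Os. [:-b, 1:])"
    using insert assms l by (intro map_poly_mult_h prod_lin_polys) auto
  also have "map_poly h [:-x,1:] = [:-h x, 1:]"
    using assms insert fhom_diff[OF assms(1,2), of 0 x]
    by (auto simp: fhom_0 fhom_1 map_poly_pCons sf_0)
  finally show ?case using insert by simp
qed



definition alg :: "complex set \<Rightarrow> complex \<Rightarrow> bool" where
  "alg F z \<longleftrightarrow> (\<exists>p\<in>polys F. p \<noteq> 0 \<and> poly p z = 0)"

definition sext :: "complex set \<Rightarrow> complex \<Rightarrow> complex set" where
  "sext F z = {poly p z | p. p \<in> polys F}"

lemma polys_div:
  assumes F: "is_subfield_C F" and m: "m \<in> polys F" "m \<noteq> 0"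
  shows "p \<in> polys F \<Longrightarrow> \<exists>q r. q \<in> polys F \<and> r \<in> polys F \<and> p = m*q + r \<and> (r = 0 \<or> degree r < degree m)"
proof (induction "degree p" arbitrary: p rule: less_induct)
  case less
  show ?case
  proof (cases "p = 0 \<or> degree p < degree m")
    case True
    then show ?thesis using less.prems F by (intro exI[of _ 0] exI[of _ p]) (auto simp: polys_zero)
  next
    case False
    hence p0: "p \<noteq> 0" and dge: "degree m \<le> degree p" by auto
    define c where "c = lead_coeff p / lead_coeff m"
    define d where "d = degree p - degree m"
    define p' where "p' = p - monom c d * m"
    have cF: "c \<in> F" unfolding c_def using less.prems m F by (intro sf_divide polys_coeff)
    have sF: "monom c d \<in> polys F" by (rule polys_monom[OF F cF])
    have p'F: "p' \<in> polys F" unfolding p'_def using less.prems sF m F by (intro polys_diff polys_mult) auto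
    have lm: "lead_coeff m \<noteq> 0" using m by simp
    have "coeff (monom c d * m) (degree p) = c * coeff m (degree m)"
      using dge by (simp add: coeff_monom_mult d_def)
    also have "\<dots> = lead_coeff p" using lm by (simp add: c_def)
    finally have top: "coeff p' (degree p) = 0" by (simp add: p'_def)
    have "degree (monom c d * m) \<le> degree p"
      using degree_mult_le[of "monom c d" m] degree_monom_le[of c d] dge unfolding d_def by linarith
    hence dle: "degree p' \<le> degree p" unfolding p'_def by (intro degree_diff_le) auto
    show ?thesis
    proof (cases "p' = 0")
      case True
      then show ?thesis using sF F
        by (intro exI[of _ "monom c d"] exI[of _ 0]) (auto simp: p'_def polys_zero mult.commute)
    next
      case False
      have "degree p' \<noteq> degree p" using False top leading_coeff_0_iff by metis
      with dle have "degree p' < degree p" by simp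
      from less.hyps[OF this p'F] obtain q r where qr: "q \<in> polys F" "r \<in> polys F" "p' = m*q + r"
        "r = 0 \<or> degree r < degree m" by blast
      have "p = m * (monom c d + q) + r" using qr(3) unfolding p'_def by (simp add: algebra_simps)
      then show ?thesis using qr sF F by (intro exI[of _ "monom c d + q"] exI[of _ r]) (auto intro: polys_add)
    qed
  qed
qed

lemma minpoly_exists:
  assumes F: "is_subfield_C F" and a: "alg F z"
  obtains m where "m \<in> polys F" "m \<noteq> 0" "poly m z = 0" "lead_coeff m = 1"
    "\<And>p. p \<in> polys F \<Longrightarrow> p \<noteq> 0 \<Longrightarrow> poly p z = 0 \<Longrightarrow> degree m \<le> degree p"
proof -
  define P where "P = (\<lambda>d. \<exists>p\<in>polys F. p \<noteq> 0 \<and> poly p z = 0 \<and> degree p = d)"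
  from a obtain p0 where p0: "p0 \<in> polys F" "p0 \<noteq> 0" "poly p0 z = 0" unfolding alg_def by blast
  have Pp0: "P (degree p0)" unfolding P_def using p0 by blast
  define d0 where "d0 = Least P"
  have Pd0: "P d0" unfolding d0_def using Pp0 by (rule LeastI)
  from Pd0 obtain m0 where m0: "m0 \<in> polys F" "m0 \<noteq> 0" "poly m0 z = 0" "degree m0 = d0"
    unfolding P_def by blast
  have min: "degree m0 \<le> degree p" if "p \<in> polys F" "p \<noteq> 0" "poly p z = 0" for p
  proof -
    have "P (degree p)" unfolding P_def using that by blast
    hence "d0 \<le> degree p" unfolding d0_def by (rule Least_le)
    thus ?thesis using m0(4) by simp
  qed
  define m where "m = smult (inverse (lead_coeff m0)) m0"
  have dm: "degree m = degree m0" using m0(2) by (simp add: m_def)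
  show ?thesis
  proof (rule that)
    show "m \<in> polys F" unfolding m_def using F m0 by (intro polys_smult sf_inv polys_coeff)
    show "m \<noteq> 0" using m0(2) by (simp add: m_def)
    show "poly m z = 0" using m0(3) by (simp add: m_def)
    show "lead_coeff m = 1" using m0(2) by (simp add: m_def)
    show "degree m \<le> degree p" if "p \<in> polys F" "p \<noteq> 0" "poly p z = 0" for p
      using min[OF that] dm by simp
  qed
qed

lemma minpoly_dvd:
  assumes F: "is_subfield_C F" and m: "m \<in> polys F" "m \<noteq> 0" "poly m z = 0"
    and min: "\<And>p. p \<in> polys F \<Longrightarrow> p \<noteq> 0 \<Longrightarrow> poly p z = 0 \<Longrightarrow> degree m \<le> degree p"
    and p: "p \<in> polys F" "poly p z = 0"
  shows "\<exists>q\<in>polys F. p = m * q"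
proof -
  obtain q r where qr: "q \<in> polys F" "r \<in> polys F" "p = m*q + r" "r = 0 \<or> degree r < degree m"
    using polys_div[OF F m(1,2) p(1)] by blast
  have "poly r z = 0" using qr(3) p(2) m(3) by (simp add: poly_add poly_mult)
  hence "r = 0" using min[OF qr(2)] qr(4) by fastforce
  thus ?thesis using qr by auto
qed

lemma sext_inv_aux:
  assumes F: "is_subfield_C F" and m: "m \<in> polys F" "m \<noteq> 0" "poly m z = 0"
    and min: "\<And>p. p \<in> polys F \<Longrightarrow> p \<noteq> 0 \<Longrightarrow> poly p z = 0 \<Longrightarrow> degree m \<le> degree p"
  shows "p \<in> polys F \<Longrightarrow> poly p z \<noteq> 0 \<Longrightarrow> \<exists>h\<in>polys F. poly p z * poly h z = 1"
proof (induction "degree p" arbitrary: p rule: less_induct)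
  case less
  have p0: "p \<noteq> 0" using less.prems by auto
  show ?case
  proof (cases "degree p = 0")
    case True
    define c where "c = coeff p 0"
    have p: "p = [:c:]" using True by (simp add: c_def degree_0_id)
    have "c \<noteq> 0" using p0 p by auto
    moreover have "c \<in> F" using less.prems(1) by (simp add: c_def polys_coeff)
    ultimately show ?thesis using F p
      by (intro bexI[of _ "[:inverse c:]"]) (auto intro: polys_const sf_inv)
  next
    case dp: False
    show ?thesis
    proof (cases "degree p < degree m")
      case True
      obtain q r where qr: "q \<in> polys F" "r \<in> polys F" "m = p*q + r" "r = 0 \<or> degree r < degree p"
        using polys_div[OF F less.prems(1) p0 m(1)] by blast
      have pzq: "poly r z = - (poly p z * poly q z)" using m(3) qr(3)
        by (simp add: poly_add poly_mult eq_neg_iff_add_eq_0 add.commute)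
      have "poly q z \<noteq> 0"
      proof
        assume q0: "poly q z = 0"
        have qn0: "q \<noteq> 0"
        proof
          assume "q = 0"
          hence "m = r" using qr(3) by simp
          thus False using m(2) qr(4) True by auto
        qed
        have dpq: "degree (p*q) = degree p + degree q" using p0 qn0 by (rule degree_mult_eq)
        have "degree m = degree (p*q)"
        proof (cases "r = 0")
          case True then show ?thesis using qr(3) by simp
        next
          case False
          hence "degree r < degree (p*q)" using qr(4) dpq by auto
          thus ?thesis using qr(3) by (simp add: degree_add_eq_left)
        qed
        hence "degree q < degree m" using dpq dp by auto
        thus False using min[OF qr(1) qn0 q0] by simp
      qed
      hence rz: "poly r z \<noteq> 0" using pzq less.prems(2) by simp
      hence "r \<noteq> 0" by auto
      hence "degree r < degree p" using qr(4) by auto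
      from less.hyps[OF this qr(2) rz] obtain h where h: "h \<in> polys F" "poly r z * poly h z = 1" by blast
      have "poly p z * poly (- (q*h)) z = poly r z * poly h z" using pzq by (simp add: poly_mult)
      thus ?thesis using h qr F by (intro bexI[of _ "- (q*h)"]) (auto intro: polys_uminus polys_mult)
    next
      case False
      obtain q r where qr: "q \<in> polys F" "r \<in> polys F" "p = m*q + r" "r = 0 \<or> degree r < degree m"
        using polys_div[OF F m(1,2) less.prems(1)] by blast
      have rz: "poly r z = poly p z" using qr(3) m(3) by (simp add: poly_add poly_mult)
      hence "r \<noteq> 0" using less.prems(2) by auto
      hence "degree r < degree p" using qr(4) False by auto
      from less.hyps[OF this qr(2)] rz less.prems(2) show ?thesis by auto
    qed
  qed
qed

lemma sext_subfield:
  assumes F: "is_subfield_C F" and a: "alg F z"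
  shows "is_subfield_C (sext F z)"
proof -
  obtain m where m: "m \<in> polys F" "m \<noteq> 0" "poly m z = 0" and "lead_coeff m = 1"
    and min: "\<And>p. p \<in> polys F \<Longrightarrow> p \<noteq> 0 \<Longrightarrow> poly p z = 0 \<Longrightarrow> degree m \<le> degree p"
    using minpoly_exists[OF F a] by blast
  have c0: "0 \<in> sext F z" unfolding sext_def using polys_zero[OF F] by force
  have c1: "1 \<in> sext F z" unfolding sext_def using polys_one[OF F] by (force intro!: exI[of _ 1])
  have ops: "x + y \<in> sext F z \<and> x - y \<in> sext F z \<and> x * y \<in> sext F z"
    if xy: "x \<in> sext F z" "y \<in> sext F z" for x y
  proof -
    obtain p where p: "p \<in> polys F" "x = poly p z"
      using xy(1) unfolding sext_def by blast
    obtain q where q: "q \<in> polys F" "y = poly q z"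
      using xy(2) unfolding sext_def by blast
    note pq = p(1) q(1) p(2) q(2)
    have "x + y = poly (p + q) z" "x - y = poly (p - q) z" "x * y = poly (p * q) z"
      using pq by (auto simp: poly_mult)
    thus ?thesis unfolding sext_def using pq F by (blast intro: polys_add polys_diff polys_mult)
  qed
  have inv: "inverse x \<in> sext F z" if xs: "x \<in> sext F z" "x \<noteq> 0" for x
  proof -
    obtain p where p: "p \<in> polys F" "x = poly p z" using xs(1) unfolding sext_def by blast
    obtain h where h: "h \<in> polys F" "poly p z * poly h z = 1"
      using sext_inv_aux[OF F m min p(1)] xs p by blast
    have "inverse (poly p z) = poly h z" by (rule inverse_unique) (rule h(2))
    hence "inverse x = poly h z" "h \<in> polys F" using p h by auto
    thus ?thesis unfolding sext_def by blast
  qed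
  show ?thesis unfolding is_subfield_C_def using c0 c1 ops inv by blast
qed

lemma sext_base: "is_subfield_C F \<Longrightarrow> c \<in> F \<Longrightarrow> c \<in> sext F z"
  unfolding sext_def mem_Collect_eq by (rule exI[of _ "[:c:]"]) (simp add: polys_const)

lemma sext_gen: "is_subfield_C F \<Longrightarrow> z \<in> sext F z"
  unfolding sext_def mem_Collect_eq by (rule exI[of _ "[:0, 1:]"]) (simp add: polys_lin sf_0 sf_1)

lemma sext_least: "is_subfield_C M \<Longrightarrow> F \<subseteq> M \<Longrightarrow> z \<in> M \<Longrightarrow> sext F z \<subseteq> M"
proof
  fix x assume a: "is_subfield_C M" "F \<subseteq> M" "z \<in> M" "x \<in> sext F z"
  then obtain p where "p \<in> polys F" "x = poly p z" unfolding sext_def by blast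
  moreover have "p \<in> polys M" using polys_mono[OF a(2)] calculation(1) by blast
  ultimately show "x \<in> M" using poly_in_sf[OF a(1) _ a(3)] by simp
qed

lemma adjoin_sext:
  assumes F: "is_subfield_C F" and a: "alg F z"
  shows "adjoin F z = sext F z"
proof
  show "adjoin F z \<subseteq> sext F z" unfolding adjoin_def
    using sext_subfield[OF F a] sext_base[OF F] sext_gen[OF F] by blast
  show "sext F z \<subseteq> adjoin F z" unfolding adjoin_def
    using sext_least by blast
qed

lemma adjoin_least: "is_subfield_C M \<Longrightarrow> F \<subseteq> M \<Longrightarrow> z \<in> M \<Longrightarrow> adjoin F z \<subseteq> M"
  unfolding adjoin_def by blast

lemma adjoin_base: "F \<subseteq> adjoin F z" unfolding adjoin_def by blast
lemma adjoin_gen: "z \<in> adjoin F z" unfolding adjoin_def by blast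

lemma zeta_pow: "n \<ge> 1 \<Longrightarrow> zeta n ^ n = 1"
  using complex_root_unity[of n 1] by (simp add: zeta_def)

lemma alg_zeta: assumes F: "is_subfield_C F" and n: "n \<ge> 1" shows "alg F (zeta n)"
proof -
  have "monom 1 n - 1 \<in> polys F" using F by (intro polys_diff polys_monom polys_one sf_1)
  moreover have "monom 1 n - 1 \<noteq> (0::complex poly)"
  proof
    assume "monom 1 n - 1 = (0::complex poly)"
    hence "coeff (monom 1 n - 1) n = (coeff 0 n :: complex)" by simp
    thus False using n by simp
  qed
  moreover have "poly (monom 1 n - 1) (zeta n) = 0" using zeta_pow[OF n] by (simp add: poly_monom)
  ultimately show ?thesis unfolding alg_def by blast
qed



lemma Gal_Bij: "\<sigma> \<in> Gal L K \<Longrightarrow> \<sigma> \<in> Bij L" by (simp add: Gal_def)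
lemma Gal_maps: "\<sigma> \<in> Gal L K \<Longrightarrow> x \<in> L \<Longrightarrow> \<sigma> x \<in> L"
  by (auto simp: Gal_def Bij_def bij_betw_def)
lemma Gal_inj: "\<sigma> \<in> Gal L K \<Longrightarrow> inj_on \<sigma> L"
  by (auto simp: Gal_def Bij_def bij_betw_def)
lemma Gal_img: "\<sigma> \<in> Gal L K \<Longrightarrow> \<sigma> ` L = L"
  by (auto simp: Gal_def Bij_def bij_betw_def)
lemma Gal_ext: "\<sigma> \<in> Gal L K \<Longrightarrow> x \<notin> L \<Longrightarrow> \<sigma> x = undefined"
  by (auto simp: Gal_def Bij_def extensional_def)
lemma Gal_fix: "\<sigma> \<in> Gal L K \<Longrightarrow> x \<in> K \<Longrightarrow> \<sigma> x = x"
  by (auto simp: Gal_def)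
lemma Gal_add: "\<sigma> \<in> Gal L K \<Longrightarrow> x \<in> L \<Longrightarrow> y \<in> L \<Longrightarrow> \<sigma> (x + y) = \<sigma> x + \<sigma> y"
  by (auto simp: Gal_def)
lemma Gal_mult: "\<sigma> \<in> Gal L K \<Longrightarrow> x \<in> L \<Longrightarrow> y \<in> L \<Longrightarrow> \<sigma> (x * y) = \<sigma> x * \<sigma> y"
  by (auto simp: Gal_def)
lemma Gal_fhom: "\<sigma> \<in> Gal L K \<Longrightarrow> 1 \<in> K \<Longrightarrow> fhom L \<sigma>"
  by (auto simp: Gal_def fhom_def)

lemma GalI:
  assumes "\<sigma> \<in> extensional L" "bij_betw \<sigma> L L"
    "\<And>x y. x \<in> L \<Longrightarrow> y \<in> L \<Longrightarrow> \<sigma> (x + y) = \<sigma> x + \<sigma> y"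
    "\<And>x y. x \<in> L \<Longrightarrow> y \<in> L \<Longrightarrow> \<sigma> (x * y) = \<sigma> x * \<sigma> y"
    "\<And>x. x \<in> K \<Longrightarrow> \<sigma> x = x"
  shows "\<sigma> \<in> Gal L K"
  using assms by (auto simp: Gal_def Bij_def)

lemma bij_restrict: "bij_betw (restrict f A) A B = bij_betw f A B"
  by (rule bij_betw_cong) simp

lemma Gal_inv:
  assumes g: "g \<in> Gal L K" and KL: "K \<subseteq> L" and L: "is_subfield_C L"
  shows "restrict (inv_into L g) L \<in> Gal L K"
proof -
  have bij: "bij_betw g L L" and inj: "inj_on g L" and img: "g ` L = L"
    using g by (auto simp: Gal_def Bij_def bij_betw_def)
  have hback: "inv_into L g (g a) = a" if "a \<in> L" for a using inj that by (rule inv_into_f_f)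
  have inL: "inv_into L g x \<in> L" if "x \<in> L" for x using that img by (metis inv_into_into)
  have fw: "g (inv_into L g x) = x" if "x \<in> L" for x using that img by (metis f_inv_into_f)
  show ?thesis
  proof (rule GalI)
    show "restrict (inv_into L g) L \<in> extensional L" by simp
    show "bij_betw (restrict (inv_into L g) L) L L"
      using bij_betw_inv_into[OF bij] bij_restrict by blast
    fix x y assume xy: "x \<in> L" "y \<in> L"
    define a where "a = inv_into L g x"
    define b where "b = inv_into L g y"
    have ab: "a \<in> L" "b \<in> L" "g a = x" "g b = y" using xy inL fw by (auto simp: a_def b_def)
    have "g (a + b) = x + y" "g (a * b) = x * y" using ab g by (auto simp: Gal_add Gal_mult)
    moreover have "a + b \<in> L" "a * b \<in> L" using ab L by (auto simp: sf_add sf_mult)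
    ultimately have "inv_into L g (x + y) = a + b" "inv_into L g (x * y) = a * b"
      using hback[of "a + b"] hback[of "a * b"] by simp_all
    moreover have "x + y \<in> L" "x * y \<in> L" using xy L by (auto simp: sf_add sf_mult)
    ultimately show "restrict (inv_into L g) L (x + y) = restrict (inv_into L g) L x + restrict (inv_into L g) L y"
      "restrict (inv_into L g) L (x * y) = restrict (inv_into L g) L x * restrict (inv_into L g) L y"
      using xy by (auto simp: a_def b_def)
  next
    fix x assume "x \<in> K"
    thus "restrict (inv_into L g) L x = x" using KL hback Gal_fix[OF g] by (metis restrict_apply' subsetD)
  qed
qed

lemma Gal_restrict:
  assumes g: "g \<in> Gal L K" and hML: "M \<subseteq> L" and KM: "K \<subseteq> M" and M: "is_subfield_C M"
    and hin: "\<And>x. x \<in> M \<Longrightarrow> g x \<in> M" and hon: "\<And>x. x \<in> M \<Longrightarrow> \<exists>y\<in>M. g y = x"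
  shows "restrict g M \<in> Gal M K"
proof (rule GalI)
  show "restrict g M \<in> extensional M" by simp
  have "inj_on g M" using Gal_inj[OF g] hML by (rule inj_on_subset)
  moreover have "g ` M = M" using hin hon by blast
  ultimately show "bij_betw (restrict g M) M M" by (simp add: bij_betw_def inj_on_def)
next
  fix x y assume xy: "x \<in> M" "y \<in> M"
  have "x + y \<in> M" "x * y \<in> M" using xy M by (auto simp: sf_add sf_mult)
  thus "restrict g M (x + y) = restrict g M x + restrict g M y"
    "restrict g M (x * y) = restrict g M x * restrict g M y"
    using xy hML g Gal_add[OF g, of x y] Gal_mult[OF g, of x y] by auto
next
  fix x assume "x \<in> K" thus "restrict g M x = x" using KM Gal_fix[OF g] by auto
qed

lemma Gal_comp:
  assumes s: "s \<in> Gal L K" and t: "t \<in> Gal L K" and L: "is_subfield_C L" and KL: "K \<subseteq> L"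
  shows "restrict (s \<circ> t) L \<in> Gal L K"
proof (rule GalI)
  show "restrict (s \<circ> t) L \<in> extensional L" by simp
  have "bij_betw (s \<circ> t) L L" using s t by (auto simp: Gal_def Bij_def intro: bij_betw_trans)
  thus "bij_betw (restrict (s \<circ> t) L) L L" using bij_restrict by blast
next
  fix x y assume xy: "x \<in> L" "y \<in> L"
  thus "restrict (s \<circ> t) L (x + y) = restrict (s \<circ> t) L x + restrict (s \<circ> t) L y"
    "restrict (s \<circ> t) L (x * y) = restrict (s \<circ> t) L x * restrict (s \<circ> t) L y"
    using xy L s t by (auto simp: sf_add sf_mult Gal_add Gal_mult Gal_maps)
next
  fix x assume "x \<in> K" thus "restrict (s \<circ> t) L x = x" using KL s t by (auto simp: Gal_fix)
qed


lemma root_unity_zeta: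
  assumes n: "n \<ge> 1" and w: "w ^ n = 1"
  shows "\<exists>j. w = zeta n ^ j"
proof -
  have "w \<in> {z::complex. z^n = 1}" using w by simp
  then obtain j where j: "w = exp(2 * of_real pi * \<i> * of_nat j / of_nat n)"
    using complex_roots_unity[OF n] by blast
  have "zeta n ^ j = exp (of_nat j * (complex_of_real (2 * pi) * \<i> / of_nat n))"
    by (simp only: zeta_def exp_of_nat_mult)
  also have "\<dots> = w" unfolding j by (simp add: field_simps)
  finally show ?thesis by metis
qed

lemma poly_prod_lin: "poly (\<Prod>b\<in>Os. [:-b, 1:]) (x::complex) = (\<Prod>b\<in>Os. x - b)"
proof -
  have "\<And>b. poly [:-b, 1:] x = x - b" by simp
  thus ?thesis by (simp add: poly_prod)
qed

lemma normal_maps: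
  assumes k: "is_subfield_C k" and k1: "is_subfield_C k1" and kk1: "k \<subseteq> k1"
    and fix1: "fixed_field k1 (Gal k1 k) = k" and fin: "finite (Gal k1 k)"
    and L: "is_subfield_C L" and k1L: "k1 \<subseteq> L" and g: "g \<in> Gal L k" and \<alpha>: "\<alpha> \<in> k1"
  shows "g \<alpha> \<in> k1"
proof -
  define Os where "Os = (\<lambda>\<sigma>. \<sigma> \<alpha>) ` Gal k1 k"
  have finO: "finite Os" using fin by (simp add: Os_def)
  have Ok1: "Os \<subseteq> k1" using \<alpha> by (auto simp: Os_def Gal_maps)
  have idG: "restrict id k1 \<in> Gal k1 k"
    using kk1 k1 by (intro GalI) (auto simp: bij_betw_def inj_on_def sf_add sf_mult)
  have aO: "\<alpha> \<in> Os" unfolding Os_def by (rule image_eqI[of _ _ "restrict id k1"]) (use \<alpha> idG in auto)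
  define q where "q = (\<Prod>b\<in>Os. [:-b, 1:])"
  have qk1: "q \<in> polys k1" unfolding q_def using k1 finO Ok1 by (rule prod_lin_polys)
  have perm: "\<sigma> ` Os = Os" if s: "\<sigma> \<in> Gal k1 k" for \<sigma>
  proof -
    have sub: "\<sigma> ` Os \<subseteq> Os"
    proof
      fix x assume "x \<in> \<sigma> ` Os"
      then obtain \<tau> where t: "\<tau> \<in> Gal k1 k" "x = \<sigma> (\<tau> \<alpha>)" by (auto simp: Os_def)
      have "restrict (\<sigma> \<circ> \<tau>) k1 \<in> Gal k1 k" using s t(1) k1 kk1 by (rule Gal_comp)
      moreover have "x = (\<lambda>\<sigma>. \<sigma> \<alpha>) (restrict (\<sigma> \<circ> \<tau>) k1)" using \<alpha> t by simp
      ultimately show "x \<in> Os" unfolding Os_def by blast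
    qed
    have "inj_on \<sigma> Os" using Gal_inj[OF s] Ok1 by (rule inj_on_subset)
    hence "card (\<sigma> ` Os) = card Os" by (rule card_image)
    thus ?thesis using sub finO by (simp add: card_subset_eq)
  qed
  have qfix: "\<sigma> (coeff q i) = coeff q i" if s: "\<sigma> \<in> Gal k1 k" for \<sigma> i
  proof -
    have fh: "fhom k1 \<sigma>" using s sf_1[OF k] by (rule Gal_fhom)
    have "map_poly \<sigma> q = (\<Prod>b\<in>Os. [:-\<sigma> b, 1:])" unfolding q_def using fh k1 finO Ok1 by (rule map_prod_lin)
    also have "\<dots> = (\<Prod>b\<in>\<sigma> ` Os. [:-b, 1:])"
      using inj_on_subset[OF Gal_inj[OF s] Ok1] by (simp add: prod.reindex)
    also have "\<dots> = q" unfolding q_def using perm[OF s] by simp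
    finally have "coeff (map_poly \<sigma> q) i = coeff q i" by simp
    thus ?thesis using fhom_0[OF fh k1] by (simp add: coeff_map_poly)
  qed
  have qk: "q \<in> polys k" unfolding polys_def
  proof (intro CollectI allI)
    fix i
    have "coeff q i \<in> fixed_field k1 (Gal k1 k)" unfolding fixed_field_def
      using polys_coeff[OF qk1] qfix by blast
    thus "coeff q i \<in> k" using fix1 by simp
  qed
  have "poly q \<alpha> = 0" unfolding q_def poly_prod_lin by (rule prod_zero[OF finO]) (use aO in auto)
  moreover have gk: "\<forall>c\<in>k. g c = c" using Gal_fix[OF g] by blast
  have "g (poly q \<alpha>) = poly q (g \<alpha>)"
    by (rule fhom_poly_fix[OF Gal_fhom[OF g sf_1[OF k]] L qk subset_trans[OF kk1 k1L] subsetD[OF k1L \<alpha>] gk])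
  ultimately have "poly q (g \<alpha>) = 0" using fhom_0[OF Gal_fhom[OF g sf_1[OF k]] L] by simp
  hence "(\<Prod>b\<in>Os. g \<alpha> - b) = 0" unfolding q_def poly_prod_lin .
  then obtain b where "b \<in> Os" "g \<alpha> - b = 0" using prod_zero_iff[OF finO] by blast
  thus ?thesis using Ok1 by auto
qed

lemma normal_restrict:
  assumes k: "is_subfield_C k" and k1: "is_subfield_C k1" and kk1: "k \<subseteq> k1"
    and fix1: "fixed_field k1 (Gal k1 k) = k" and fin: "finite (Gal k1 k)"
    and L: "is_subfield_C L" and k1L: "k1 \<subseteq> L" and g: "g \<in> Gal L k"
  shows "restrict g k1 \<in> Gal k1 k"
proof (rule Gal_restrict[OF g k1L kk1 k1])
  show "g x \<in> k1" if "x \<in> k1" for x using normal_maps[OF assms that] .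
  show "\<exists>y\<in>k1. g y = x" if x: "x \<in> k1" for x
  proof -
    have g': "restrict (inv_into L g) L \<in> Gal L k" using g subset_trans[OF kk1 k1L] L by (rule Gal_inv)
    have "restrict (inv_into L g) L x \<in> k1" using normal_maps[OF k k1 kk1 fix1 fin L k1L g' x] .
    moreover have "g (restrict (inv_into L g) L x) = x"
      using x k1L Gal_img[OF g] by (auto intro: f_inv_into_f)
    ultimately show ?thesis by blast
  qed
qed



lemma xn1_polys: "is_subfield_C F \<Longrightarrow> (monom 1 n - 1 :: complex poly) \<in> polys F"
  by (intro polys_diff polys_monom polys_one sf_1)

lemma xn1_nz: "n \<ge> 1 \<Longrightarrow> (monom 1 n - 1 :: complex poly) \<noteq> 0"
proof
  assume "n \<ge> 1" "monom 1 n - 1 = (0::complex poly)"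
  hence "coeff (monom 1 n - 1) n = (coeff 0 n :: complex)" by simp
  thus False using \<open>n \<ge> 1\<close> by simp
qed

lemma xn1_rsf: assumes n: "n \<ge> 1" shows "rsquarefree (monom 1 n - 1 :: complex poly)"
  unfolding rsquarefree_roots
proof (intro allI notI)
  fix a :: complex assume a: "poly (monom 1 n - 1) a = 0 \<and> poly (pderiv (monom 1 n - 1)) a = 0"
  hence an: "a ^ n = 1" by (simp add: poly_monom)
  hence "a \<noteq> 0" using n by (cases n) auto
  have "pderiv (monom 1 n - 1 :: complex poly) = monom (of_nat n) (n - 1)"
    by (simp add: pderiv_diff pderiv_monom)
  hence "of_nat n * a ^ (n - 1) = 0" using a by (simp add: poly_monom)
  thus False using \<open>a \<noteq> 0\<close> n by simp
qed

lemma rsf_dvd: assumes "rsquarefree q" "p dvd q" shows "rsquarefree p"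
proof -
  have q0: "q \<noteq> 0" using assms(1) by (simp add: rsquarefree_def)
  hence p0: "p \<noteq> 0" using assms(2) by auto
  have "order a p = 0 \<or> order a p = 1" for a
    using dvd_imp_order_le[OF q0 assms(2), of a] assms(1) unfolding rsquarefree_def
    by (metis le_Suc_eq le_zero_eq One_nat_def)
  thus ?thesis using p0 by (simp add: rsquarefree_def)
qed

lemma extend:
  assumes k: "is_subfield_C k" and k1: "is_subfield_C k1" and kk1: "k \<subseteq> k1" and n: "n \<ge> 1"
    and disj: "k1 \<inter> adjoin k (zeta n) = k"
    and \<sigma>: "\<sigma> \<in> Gal k1 k" and g2: "g2 \<in> Gal (adjoin k (zeta n)) k"
  shows "\<exists>g\<in>Gal (adjoin k1 (zeta n)) k. restrict g k1 = \<sigma> \<and> (\<forall>y\<in>adjoin k (zeta n). g y = g2 y)"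
proof -
  define \<zeta> where "\<zeta> = zeta n"
  define K where "K = adjoin k \<zeta>"
  define L where "L = adjoin k1 \<zeta>"
  have Ke: "K = sext k \<zeta>" unfolding K_def \<zeta>_def using k alg_zeta[OF k n] by (rule adjoin_sext)
  have Le: "L = sext k1 \<zeta>" unfolding L_def \<zeta>_def using k1 alg_zeta[OF k1 n] by (rule adjoin_sext)
  have Ks: "is_subfield_C K" unfolding Ke \<zeta>_def using k alg_zeta[OF k n] by (rule sext_subfield)
  have Ls: "is_subfield_C L" unfolding Le \<zeta>_def using k1 alg_zeta[OF k1 n] by (rule sext_subfield)
  have kK: "k \<subseteq> K" and zK: "\<zeta> \<in> K" unfolding K_def by (auto simp: adjoin_base adjoin_gen)
  have k1L: "k1 \<subseteq> L" and zL: "\<zeta> \<in> L" unfolding L_def by (auto simp: adjoin_base adjoin_gen)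
  have KL: "K \<subseteq> L" unfolding K_def using Ls subset_trans[OF kk1 k1L] zL by (rule adjoin_least)
  have disj': "k1 \<inter> K = k" using disj by (simp add: K_def \<zeta>_def)
  have g2': "g2 \<in> Gal K k" using g2 by (simp add: K_def \<zeta>_def)
  have fs: "fhom k1 \<sigma>" using \<sigma> sf_1[OF k] by (rule Gal_fhom)
  have s0: "\<sigma> 0 = 0" using fhom_0[OF fs k1] .
  have fg2: "fhom K g2" using g2' sf_1[OF k] by (rule Gal_fhom)
  obtain m where m: "m \<in> polys k1" "m \<noteq> 0" "poly m \<zeta> = 0" "lead_coeff m = 1"
    and min: "\<And>p. p \<in> polys k1 \<Longrightarrow> p \<noteq> 0 \<Longrightarrow> poly p \<zeta> = 0 \<Longrightarrow> degree m \<le> degree p"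
    using minpoly_exists[OF k1 alg_zeta[OF k1 n]] unfolding \<zeta>_def by blast
  define u where "u = (monom 1 n - 1 :: complex poly)"
  have u1: "u \<in> polys k1" unfolding u_def using k1 by (rule xn1_polys)
  have u2: "poly u \<zeta> = 0" unfolding u_def \<zeta>_def using zeta_pow[OF n] by (simp add: poly_monom)
  obtain q where q: "q \<in> polys k1" "u = m * q" using minpoly_dvd[OF k1 m(1-3) min u1 u2] by blast
  have "rsquarefree u" unfolding u_def by (rule xn1_rsf[OF n])
  moreover have "m dvd u" using q(2) by simp
  ultimately have "rsquarefree m" by (rule rsf_dvd)
  hence "smult (lead_coeff m) (\<Prod>z|poly m z = 0. [:-z, 1:]) = m" by (rule complex_poly_decompose_rsquarefree)
  hence mdec: "m = (\<Prod>z|poly m z = 0. [:-z, 1:])" using m(4) by simp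
  have Rfin: "finite {z. poly m z = 0}" using m(2) by (rule poly_roots_finite)
  have RK: "{z. poly m z = 0} \<subseteq> K"
  proof
    fix z assume "z \<in> {z. poly m z = 0}"
    hence "poly u z = 0" using q(2) by (simp add: poly_mult)
    hence "z ^ n = 1" by (simp add: u_def poly_monom)
    then obtain j where "z = zeta n ^ j" using root_unity_zeta[OF n] by blast
    thus "z \<in> K" using sf_power[OF Ks zK] by (simp add: \<zeta>_def)
  qed
  have mK: "m \<in> polys K" using prod_lin_polys[OF Ks Rfin RK] mdec by simp
  have mk: "m \<in> polys k" using mK m(1) disj' unfolding polys_def by blast
  define \<zeta>' where "\<zeta>' = g2 \<zeta>"
  have z'K: "\<zeta>' \<in> K" unfolding \<zeta>'_def using g2' zK by (rule Gal_maps)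
  have z'L: "\<zeta>' \<in> L" using z'K KL by auto
  have g2k: "\<forall>c\<in>k. g2 c = c" using Gal_fix[OF g2'] by blast
  have g2poly: "g2 (poly p \<zeta>) = poly p \<zeta>'" if "p \<in> polys k" for p
    unfolding \<zeta>'_def by (rule fhom_poly_fix[OF fg2 Ks that kK zK g2k])
  have mz': "poly m \<zeta>' = 0" using g2poly[OF mk] m(3) fhom_0[OF fg2 Ks] by simp
  have smap_fix: "map_poly \<sigma> p = p" if "p \<in> polys k" for p
    using that s0 Gal_fix[OF \<sigma>] by (intro poly_eqI) (auto simp: coeff_map_poly polys_coeff)
  define rep where "rep y = (SOME p. p \<in> polys k1 \<and> poly p \<zeta> = y)" for y
  define g where "g = restrict (\<lambda>y. poly (map_poly \<sigma> (rep y)) \<zeta>') L"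
  have key: "g (poly p \<zeta>) = poly (map_poly \<sigma> p) \<zeta>'" if p: "p \<in> polys k1" for p
  proof -
    define y where "y = poly p \<zeta>"
    have yL: "y \<in> L" unfolding Le sext_def y_def using p by blast
    have "\<exists>p. p \<in> polys k1 \<and> poly p \<zeta> = y" using p y_def by blast
    hence r: "rep y \<in> polys k1" "poly (rep y) \<zeta> = y" unfolding rep_def by (metis (mono_tags, lifting) someI_ex)+
    have d1: "p - rep y \<in> polys k1" using k1 p r(1) by (rule polys_diff)
    have "poly (p - rep y) \<zeta> = 0" using r(2) by (simp add: y_def)
    then obtain t where t: "t \<in> polys k1" "p - rep y = m * t" using minpoly_dvd[OF k1 m(1-3) min d1] by blast
    have "map_poly \<sigma> p - map_poly \<sigma> (rep y) = map_poly \<sigma> (p - rep y)"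
      using map_poly_diff_h[OF fs k1 p r(1)] by simp
    also have "\<dots> = map_poly \<sigma> m * map_poly \<sigma> t" unfolding t(2) by (rule map_poly_mult_h[OF fs k1 m(1) t(1)])
    also have "\<dots> = m * map_poly \<sigma> t" using smap_fix[OF mk] by simp
    finally have "poly (map_poly \<sigma> p) \<zeta>' - poly (map_poly \<sigma> (rep y)) \<zeta>' = 0"
      using mz' by (metis mult_zero_left poly_diff poly_mult)
    thus ?thesis using yL by (simp add: g_def y_def)
  qed
  have mapk1: "map_poly \<sigma> p \<in> polys k1" if "p \<in> polys k1" for p
    using fs k1 _ that by (rule map_poly_polys) (use Gal_maps[OF \<sigma>] in blast)
  have gk1: "g c = \<sigma> c" if c: "c \<in> k1" for c
  proof -
    have "g (poly [:c:] \<zeta>) = poly (map_poly \<sigma> [:c:]) \<zeta>'" using c k1 by (intro key polys_const)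
    thus ?thesis using map_poly_const_h[OF fs k1] by simp
  qed
  have g1: "g 1 = 1" using gk1[OF sf_1[OF k1]] Gal_fix[OF \<sigma> sf_1[OF k]] by simp
  have gL: "g x \<in> L" if "x \<in> L" for x
  proof -
    obtain p where p: "p \<in> polys k1" "x = poly p \<zeta>" using \<open>x \<in> L\<close> unfolding Le sext_def by blast
    have "map_poly \<sigma> p \<in> polys L" using polys_mono[OF k1L mapk1[OF p(1)]] .
    hence "poly (map_poly \<sigma> p) \<zeta>' \<in> L" using Ls z'L by (intro poly_in_sf)
    thus ?thesis using key[OF p(1)] p(2) by simp
  qed
  have ghom: "g (x + y) = g x + g y \<and> g (x * y) = g x * g y" if xy: "x \<in> L" "y \<in> L" for x y
  proof -
    obtain p where p: "p \<in> polys k1" "x = poly p \<zeta>" using xy(1) unfolding Le sext_def by blast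
    obtain r where r: "r \<in> polys k1" "y = poly r \<zeta>" using xy(2) unfolding Le sext_def by blast
    have "g (x + y) = g (poly (p + r) \<zeta>)" using p r by simp
    also have "\<dots> = poly (map_poly \<sigma> (p + r)) \<zeta>'" using k1 p r by (intro key polys_add)
    also have "\<dots> = g x + g y" using map_poly_add_h[OF fs k1 p(1) r(1)] key[OF p(1)] key[OF r(1)] p r by simp
    finally have A: "g (x + y) = g x + g y" .
    have "g (x * y) = g (poly (p * r) \<zeta>)" using p r by (simp add: poly_mult)
    also have "\<dots> = poly (map_poly \<sigma> (p * r)) \<zeta>'" using k1 p r by (intro key polys_mult)
    also have "\<dots> = g x * g y" using map_poly_mult_h[OF fs k1 p(1) r(1)] key[OF p(1)] key[OF r(1)] p r
      by (simp add: poly_mult)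
    finally show ?thesis using A by simp
  qed
  have fg: "fhom L g" unfolding fhom_def using ghom g1 by blast
  have gK: "g y = g2 y" if y: "y \<in> K" for y
  proof -
    obtain p where p: "p \<in> polys k" "y = poly p \<zeta>" using y unfolding Ke sext_def by blast
    have "g y = poly (map_poly \<sigma> p) \<zeta>'" using key[OF polys_mono[OF kk1 p(1)]] p(2) by simp
    also have "\<dots> = poly p \<zeta>'" using smap_fix[OF p(1)] by simp
    also have "\<dots> = g2 y" using g2poly[OF p(1)] p(2) by simp
    finally show ?thesis .
  qed
  have ginj: "inj_on g L"
  proof (rule inj_onI)
    fix x y assume xy: "x \<in> L" "y \<in> L" "g x = g y"
    show "x = y"
    proof (rule ccontr)
      assume "x \<noteq> y"
      hence d: "x - y \<noteq> 0" by simp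
      have dL: "x - y \<in> L" "inverse (x - y) \<in> L" using xy Ls by (auto simp: sf_diff sf_inv)
      have "g (x - y) = 0" using fhom_diff[OF fg Ls xy(1,2)] xy(3) by simp
      moreover have "g ((x - y) * inverse (x - y)) = g (x - y) * g (inverse (x - y))"
        using fhom_mult[OF fg dL] .
      ultimately show False using d g1 by simp
    qed
  qed
  have gsurj: "\<exists>w\<in>L. g w = y" if y: "y \<in> L" for y
  proof -
    obtain p where p: "p \<in> polys k1" "y = poly p \<zeta>" using y unfolding Le sext_def by blast
    obtain w where w: "w \<in> K" "g2 w = \<zeta>" using Gal_img[OF g2'] zK by (metis imageE)
    have wL: "w \<in> L" using w(1) KL by auto
    have gw: "g w = \<zeta>" using gK[OF w(1)] w(2) by simp
    define s where "s = inv_into k1 \<sigma>"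
    have simg: "\<sigma> ` k1 = k1" using Gal_img[OF \<sigma>] .
    have sk1: "s c \<in> k1" if "c \<in> k1" for c using that simg unfolding s_def by (metis inv_into_into)
    have ss: "\<sigma> (s c) = c" if "c \<in> k1" for c using that simg unfolding s_def by (metis f_inv_into_f)
    have s0': "s 0 = 0" unfolding s_def using s0 sf_0[OF k1] Gal_inj[OF \<sigma>] by (metis inv_into_f_f)
    define p' where "p' = map_poly s p"
    have p'k1: "p' \<in> polys k1" unfolding p'_def polys_def using s0' sk1 p(1)
      by (auto simp: coeff_map_poly polys_coeff)
    have "map_poly g p' = p"
    proof (rule poly_eqI)
      fix i
      have "coeff p' i = s (coeff p i)" unfolding p'_def using s0' by (simp add: coeff_map_poly)
      moreover have "coeff p i \<in> k1" using p(1) by (rule polys_coeff)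
      ultimately show "coeff (map_poly g p') i = coeff p i"
        using fhom_0[OF fg Ls] gk1 sk1 ss by (simp add: coeff_map_poly)
    qed
    moreover have "g (poly p' w) = poly (map_poly g p') (g w)"
      by (rule fhom_poly[OF fg Ls polys_mono[OF k1L p'k1] wL])
    ultimately have "g (poly p' w) = y" using gw p(2) by simp
    moreover have "poly p' w \<in> L" using Ls polys_mono[OF k1L p'k1] wL by (rule poly_in_sf)
    ultimately show ?thesis by blast
  qed
  have gG: "g \<in> Gal L k"
  proof (rule GalI)
    show "g \<in> extensional L" unfolding g_def by simp
    have "g ` L = L" using gL gsurj by blast
    thus "bij_betw g L L" using ginj by (simp add: bij_betw_def)
    show "g (x + y) = g x + g y" "g (x * y) = g x * g y" if "x \<in> L" "y \<in> L" for x y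
      using ghom[OF that] by auto
    show "g x = x" if "x \<in> k" for x using gk1[of x] that kk1 Gal_fix[OF \<sigma> that] by auto
  qed
  have "restrict g k1 = \<sigma>"
  proof
    fix x show "restrict g k1 x = \<sigma> x"
      using gk1[of x] Gal_ext[OF \<sigma>, of x] by (cases "x \<in> k1") auto
  qed
  thus ?thesis using gG gK unfolding L_def K_def \<zeta>_def by blast
qed



theorem mainTheorem14:
  fixes k k1 :: "complex set"
    and G :: "('g, 'c) monoid_scheme" and H :: "('h, 'd) monoid_scheme"
    and \<mu> :: "'g \<Rightarrow> 'h \<Rightarrow> 'h" and \<theta> :: "(complex \<Rightarrow> complex) \<Rightarrow> 'g" and \<tau> :: 'h
  assumes "number_field k"
    and "group G" and "finite (carrier G)"
    and "comm_group H" and "finite (carrier H)"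
    and "\<mu> \<in> hom G (AutoGroup H)"
    and "galois_ext k1 k"
    and "\<theta> \<in> iso (galois_group k1 k) G"
    and "\<tau> \<in> carrier H"
  shows "E_field k G H \<mu> \<tau> \<subseteq> Z_field k1 k \<theta> H \<mu> \<tau> \<inter> adjoin k (zeta (group.ord H \<tau>)) \<and>
         (k1 \<inter> adjoin k (zeta (group.ord H \<tau>)) = k \<longrightarrow>
         E_field k G H \<mu> \<tau> = Z_field k1 k \<theta> H \<mu> \<tau> \<inter> adjoin k (zeta (group.ord H \<tau>)))"
proof -
  have k: "is_subfield_C k" using assms(1) by (simp add: number_field_def)
  have k1: "is_subfield_C k1" and kk1: "k \<subseteq> k1" and fix1: "fixed_field k1 (Gal k1 k) = k"
    using assms(7) by (auto simp: galois_ext_def)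
  have carr: "carrier (galois_group k1 k) = Gal k1 k" by (simp add: galois_group_def)
  have bij\<theta>: "bij_betw \<theta> (Gal k1 k) (carrier G)" using assms(8) by (simp add: iso_def carr)
  have fin: "finite (Gal k1 k)" using bij_betw_finite[OF bij\<theta>] assms(3) by simp
  define n where "n = group.ord H \<tau>"
  have grH: "group H" using assms(4) by (simp add: comm_group_def)
  have n: "n \<ge> 1" unfolding n_def using group.ord_ge_1[OF grH assms(5,9)] .
  define \<zeta> where "\<zeta> = zeta n"
  define K where "K = adjoin k \<zeta>"
  define L where "L = adjoin k1 \<zeta>"
  have Ke: "K = sext k \<zeta>" unfolding K_def \<zeta>_def using k alg_zeta[OF k n] by (rule adjoin_sext)
  have Ks: "is_subfield_C K" unfolding Ke \<zeta>_def using k alg_zeta[OF k n] by (rule sext_subfield)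
  have Ls: "is_subfield_C L" unfolding L_def \<zeta>_def
    using k1 alg_zeta[OF k1 n] adjoin_sext sext_subfield by metis
  have kK: "k \<subseteq> K" and zK: "\<zeta> \<in> K" unfolding K_def by (auto simp: adjoin_base adjoin_gen)
  have k1L: "k1 \<subseteq> L" and zL: "\<zeta> \<in> L" unfolding L_def by (auto simp: adjoin_base adjoin_gen)
  have KL: "K \<subseteq> L" unfolding K_def using Ls subset_trans[OF kk1 k1L] zL by (rule adjoin_least)
  have kL: "k \<subseteq> L" using kk1 k1L by auto
  have rootK: "h \<zeta> \<in> K" if h: "h \<in> Gal L k" for h
  proof -
    have fh: "fhom L h" using h sf_1[OF k] by (rule Gal_fhom)
    have "h \<zeta> ^ n = h (\<zeta> ^ n)" using fhom_power[OF fh Ls zL] by simp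
    also have "\<dots> = 1" using zeta_pow[OF n] fhom_1[OF fh] by (simp add: \<zeta>_def)
    finally obtain j where "h \<zeta> = zeta n ^ j" using root_unity_zeta[OF n] by blast
    thus ?thesis using sf_power[OF Ks zK] by (simp add: \<zeta>_def)
  qed
  have mapsK: "h y \<in> K" if h: "h \<in> Gal L k" and y: "y \<in> K" for h y
  proof -
    have fh: "fhom L h" using h sf_1[OF k] by (rule Gal_fhom)
    obtain p where p: "p \<in> polys k" "y = poly p \<zeta>" using y unfolding Ke sext_def by blast
    have "h y = poly p (h \<zeta>)" unfolding p(2)
      by (rule fhom_poly_fix[OF fh Ls p(1) kL zL]) (use Gal_fix[OF h] in blast)
    moreover have "poly p (h \<zeta>) \<in> K" using Ks polys_mono[OF kK p(1)] rootK[OF h] by (rule poly_in_sf)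
    ultimately show ?thesis by simp
  qed
  have resK: "restrict h K \<in> Gal K k" if h: "h \<in> Gal L k" for h
  proof (rule Gal_restrict[OF h KL kK Ks])
    show "h x \<in> K" if "x \<in> K" for x using mapsK[OF h that] .
    show "\<exists>y\<in>K. h y = x" if x: "x \<in> K" for x
    proof -
      have h': "restrict (inv_into L h) L \<in> Gal L k" using h kL Ls by (rule Gal_inv)
      have "restrict (inv_into L h) L x \<in> K" using mapsK[OF h' x] .
      moreover have "h (restrict (inv_into L h) L x) = x"
        using x KL Gal_img[OF h] by (auto intro: f_inv_into_f)
      ultimately show ?thesis by blast
    qed
  qed
  define GS where "GS = {g2 \<in> Gal K k. \<exists>g1\<in>carrier G. \<mu> g1 \<tau> = \<tau> [^]\<^bsub>H\<^esub> nu n g2}"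
  define GT where "GT = {g \<in> Gal L k. \<mu> (\<theta> (restrict g k1)) \<tau> = \<tau> [^]\<^bsub>H\<^esub> nu n (restrict g K)}"
  have Eeq: "E_field k G H \<mu> \<tau> = fixed_field K GS"
    by (simp add: E_field_def G_set_def Let_def K_def \<zeta>_def n_def GS_def)
  have Zeq: "Z_field k1 k \<theta> H \<mu> \<tau> = fixed_field L GT"
    by (simp add: Z_field_def Gt_rel_def Let_def K_def L_def \<zeta>_def n_def GT_def)
  have Keq: "adjoin k (zeta (group.ord H \<tau>)) = K" by (simp add: K_def \<zeta>_def n_def)
  have inc1: "fixed_field K GS \<subseteq> fixed_field L GT \<inter> K"
  proof
    fix x assume x: "x \<in> fixed_field K GS"
    hence xK: "x \<in> K" and xfix: "\<And>g2. g2 \<in> GS \<Longrightarrow> g2 x = x" by (auto simp: fixed_field_def)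
    have "g x = x" if g: "g \<in> GT" for g
    proof -
      have gG: "g \<in> Gal L k" and eq: "\<mu> (\<theta> (restrict g k1)) \<tau> = \<tau> [^]\<^bsub>H\<^esub> nu n (restrict g K)"
        using g by (auto simp: GT_def)
      have "restrict g k1 \<in> Gal k1 k" using normal_restrict[OF k k1 kk1 fix1 fin Ls k1L gG] .
      hence "\<theta> (restrict g k1) \<in> carrier G" using bij\<theta> by (auto simp: bij_betw_def)
      hence "restrict g K \<in> GS" using resK[OF gG] eq unfolding GS_def by blast
      hence "restrict g K x = x" by (rule xfix)
      thus ?thesis using xK by simp
    qed
    thus "x \<in> fixed_field L GT \<inter> K" using xK KL by (auto simp: fixed_field_def)
  qed
  have inc2: "fixed_field L GT \<inter> K \<subseteq> fixed_field K GS" if disj: "k1 \<inter> K = k"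
  proof
    fix x assume x: "x \<in> fixed_field L GT \<inter> K"
    hence xK: "x \<in> K" and xfix: "\<And>g. g \<in> GT \<Longrightarrow> g x = x" by (auto simp: fixed_field_def)
    have "g2 x = x" if g2: "g2 \<in> GS" for g2
    proof -
      obtain g1 where g2G: "g2 \<in> Gal K k" and g1: "g1 \<in> carrier G" "\<mu> g1 \<tau> = \<tau> [^]\<^bsub>H\<^esub> nu n g2"
        using g2 unfolding GS_def by blast
      obtain \<sigma> where \<sigma>: "\<sigma> \<in> Gal k1 k" "\<theta> \<sigma> = g1" using bij\<theta> g1(1) unfolding bij_betw_def by (metis imageE)
      have disj': "k1 \<inter> adjoin k (zeta n) = k" using disj by (simp add: K_def \<zeta>_def)
      have g2G': "g2 \<in> Gal (adjoin k (zeta n)) k" using g2G by (simp add: K_def \<zeta>_def)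
      obtain g where gG: "g \<in> Gal L k" and gr: "restrict g k1 = \<sigma>" and gK: "\<forall>y\<in>K. g y = g2 y"
        using extend[OF k k1 kk1 n disj' \<sigma>(1) g2G'] unfolding L_def K_def \<zeta>_def by blast
      have "restrict g K (zeta n) = g2 (zeta n)" using gK zK by (simp add: \<zeta>_def)
      hence "nu n (restrict g K) = nu n g2" by (simp add: nu_def)
      hence "g \<in> GT" using gG gr \<sigma>(2) g1(2) unfolding GT_def by simp
      hence "g x = x" by (rule xfix)
      thus ?thesis using gK xK by simp
    qed
    thus "x \<in> fixed_field K GS" using xK by (auto simp: fixed_field_def)
  qed
  show ?thesis unfolding Eeq Zeq Keq using inc1 inc2 by blast
qed

end
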